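(* For any acyclic hypergraph $\mathcal{H}$, $\kappa(\mathcal{H})=\rho^*(\mathcal{H})$.
   Context: A hypergraph $\mathcal{H}=(V,E)$ (with $V=\bigcup_{e\in E}e$) is acyclic ($\alpha$-acyclic) if it admits a join tree: a tree whose nodes are the edges of $E$ such that for every vertex $v$, the nodes containing $v$ form a connected subtree. For $S\subseteq V$, $\mathcal{H}[S]$ is the hypergraph with vertex set $S$ and edge set $\{S\cap e : e\in E,\ S\cap e\neq\emptyset\}$. $\mathsf{red}(\mathcal{H})$ is obtained by removing every edge $e$ for which there is another edge $e'\neq e$ with $e\subseteq e'$. $\tau^*$ is the value of a maximum fractional edge packing (equivalently, minimum fractional vertex cover) and $\rho^*$ the value of a minimum fractional edge cover. $\kappa(\mathcal{H})=\max_{S\subseteq V}\tau^*(\mathsf{red}(\mathcal{H}[S]))$. *)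

theory Defs
  imports Complex_Main
begin

text \<open>A hypergraph is represented by its edge set E; its vertex set is the union of E.\<close>

definition hverts :: "'a set set \<Rightarrow> 'a set" where
  "hverts E = \<Union>E"

definition connected_in :: "'n set set \<Rightarrow> 'n set \<Rightarrow> bool" where
  "connected_in T X \<longleftrightarrow>
     (\<forall>x\<in>X. \<forall>y\<in>X. (x, y) \<in> {(a, b). {a, b} \<in> T \<and> a \<in> X \<and> b \<in> X}\<^sup>*)"

definition is_tree :: "'n set \<Rightarrow> 'n set set \<Rightarrow> bool" where
  "is_tree N T \<longleftrightarrow>
     finite N \<and>
     T \<subseteq> {{a, b} | a b. a \<in> N \<and> b \<in> N \<and> a \<noteq> b} \<and>
     connected_in T N \<and>
     (N \<noteq> {} \<longrightarrow> card T + 1 = card N)"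

definition join_tree :: "'a set set \<Rightarrow> 'a set set set \<Rightarrow> bool" where
  "join_tree E T \<longleftrightarrow> is_tree E T \<and>
     (\<forall>v\<in>hverts E. connected_in T {e\<in>E. v \<in> e})"

definition alpha_acyclic :: "'a set set \<Rightarrow> bool" where
  "alpha_acyclic E \<longleftrightarrow> (\<exists>T. join_tree E T)"

definition induced :: "'a set set \<Rightarrow> 'a set \<Rightarrow> 'a set set" where
  "induced E S = {S \<inter> e | e. e \<in> E \<and> S \<inter> e \<noteq> {}}"

definition red :: "'a set set \<Rightarrow> 'a set set" where
  "red E = {e \<in> E. \<not> (\<exists>e'\<in>E. e' \<noteq> e \<and> e \<subseteq> e')}"

definition frac_edge_packing :: "'a set set \<Rightarrow> ('a set \<Rightarrow> real) \<Rightarrow> bool" where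
  "frac_edge_packing E w \<longleftrightarrow>
     (\<forall>e\<in>E. 0 \<le> w e) \<and> (\<forall>v\<in>hverts E. (\<Sum>e\<in>{e\<in>E. v \<in> e}. w e) \<le> 1)"

definition frac_edge_cover :: "'a set set \<Rightarrow> ('a set \<Rightarrow> real) \<Rightarrow> bool" where
  "frac_edge_cover E w \<longleftrightarrow>
     (\<forall>e\<in>E. 0 \<le> w e) \<and> (\<forall>v\<in>hverts E. 1 \<le> (\<Sum>e\<in>{e\<in>E. v \<in> e}. w e))"

definition tau_star :: "'a set set \<Rightarrow> real" where
  "tau_star E = Sup {(\<Sum>e\<in>E. w e) | w. frac_edge_packing E w}"

definition rho_star :: "'a set set \<Rightarrow> real" where
  "rho_star E = Inf {(\<Sum>e\<in>E. w e) | w. frac_edge_cover E w}"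

definition kappa :: "'a set set \<Rightarrow> real" where
  "kappa E = Max {tau_star (red (induced E S)) | S. S \<subseteq> hverts E}"

end

theory Submission
  imports Defs
begin

definition Rel :: "'n set set \<Rightarrow> 'n set \<Rightarrow> ('n \<times> 'n) set" where
  "Rel T X = {(a, b). {a, b} \<in> T \<and> a \<in> X \<and> b \<in> X}"

lemma connected_in_Rel: "connected_in T X \<longleftrightarrow> (\<forall>x\<in>X. \<forall>y\<in>X. (x, y) \<in> (Rel T X)\<^sup>*)"
  by (simp add: connected_in_def Rel_def)

lemma leaf_inv:
  assumes "(x,y) \<in> (Rel T X)\<^sup>*" "x\<in>X" "x\<noteq>e" "e\<noteq>f" "\<forall>t\<in>T. e\<in>t \<longrightarrow> t={e,f}"
  shows "(y\<noteq>e \<and> (x,y)\<in>(Rel (T-{{e,f}}) (X-{e}))\<^sup>*) \<or> (y=e \<and> f\<in>X \<and> (x,f)\<in>(Rel (T-{{e,f}}) (X-{e}))\<^sup>*)"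
  using assms(1)
proof (induction rule: rtrancl_induct)
  case base then show ?case using assms by simp
next
  case (step y z)
  from step.hyps(2) have yz: "{y,z}\<in>T" "y\<in>X" "z\<in>X" by (auto simp: Rel_def)
  from step.IH show ?case
  proof
    assume A: "y\<noteq>e \<and> (x,y)\<in>(Rel (T-{{e,f}}) (X-{e}))\<^sup>*"
    show ?case
    proof (cases "z=e")
      case True
      then have "{y,e} = {e,f}" using yz assms(5) by auto
      then have "y=f" using A by (auto simp: doubleton_eq_iff)
      then show ?thesis using True A yz by auto
    next
      case False
      have "{y,z} \<noteq> {e,f}" using A False by (auto simp: doubleton_eq_iff)
      then have "(y,z)\<in>Rel (T-{{e,f}}) (X-{e})" using yz A False by (auto simp: Rel_def)
      then show ?thesis using A False by (meson rtrancl.rtrancl_into_rtrancl)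
    qed
  next
    assume B: "y=e \<and> f\<in>X \<and> (x,f)\<in>(Rel (T-{{e,f}}) (X-{e}))\<^sup>*"
    then have "{e,z}={e,f}" using yz assms(5) by auto
    then have "z=f" using assms(4) by (auto simp: doubleton_eq_iff)
    then show ?case using B assms(4) by auto
  qed
qed

lemma connected_remove:
  assumes "connected_in T X" "e\<noteq>f" "\<forall>t\<in>T. e\<in>t \<longrightarrow> t={e,f}"
  shows "connected_in (T-{{e,f}}) (X-{e})"
  unfolding connected_in_Rel
proof (intro ballI)
  fix x y assume "x \<in> X - {e}" "y \<in> X - {e}"
  then have "(x,y) \<in> (Rel T X)\<^sup>*" using assms(1) by (auto simp: connected_in_Rel)
  from leaf_inv[OF this] show "(x, y) \<in> (Rel (T - {{e, f}}) (X - {e}))\<^sup>*"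
    using assms \<open>x \<in> X - {e}\<close> \<open>y \<in> X - {e}\<close> by auto
qed

lemma connected_through:
  assumes "connected_in T X" "e\<noteq>f" "\<forall>t\<in>T. e\<in>t \<longrightarrow> t={e,f}" "g \<in> X" "e \<in> X" "g \<noteq> e"
  shows "f \<in> X"
proof -
  have "(g,e) \<in> (Rel T X)\<^sup>*" using assms by (auto simp: connected_in_Rel)
  from leaf_inv[OF this] show ?thesis using assms by auto
qed

lemma tree_leaf:
  assumes "is_tree N T" "2 \<le> card N"
  shows "\<exists>e f. e\<in>N \<and> f\<in>N \<and> e\<noteq>f \<and> {e,f}\<in>T \<and> (\<forall>t\<in>T. e\<in>t \<longrightarrow> t={e,f})"
proof -
  have fin: "finite N" and sub: "T \<subseteq> {{a,b}|a b. a\<in>N \<and> b\<in>N \<and> a\<noteq>b}"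
    and con: "connected_in T N" and cnt: "card T + 1 = card N"
    using assms by (auto simp: is_tree_def)
  have "T \<subseteq> Pow N" using sub by auto
  then have finT: "finite T" using fin by (meson finite_Pow_iff finite_subset)
  have card2: "card t = 2 \<and> t \<subseteq> N" if "t\<in>T" for t using sub that by auto
  define deg where "deg n = card {t\<in>T. n\<in>t}" for n
  have "(\<Sum>n\<in>N. deg n) = (\<Sum>n\<in>N. \<Sum>t\<in>{t. t\<in>T \<and> n\<in>t}. (1::nat))" by (simp add: deg_def)
  also have "\<dots> = (\<Sum>t\<in>T. \<Sum>n\<in>{n. n\<in>N \<and> n\<in>t}. 1)" by (rule sum.swap_restrict) (use fin finT in auto)
  also have "\<dots> = (\<Sum>t\<in>T. 2)"
  proof (rule sum.cong)
    fix t assume "t\<in>T"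
    then have "{n. n\<in>N \<and> n\<in>t} = t" using card2 by auto
    then show "(\<Sum>n\<in>{n. n\<in>N \<and> n\<in>t}. 1) = (2::nat)" using card2 \<open>t\<in>T\<close> by simp
  qed simp
  finally have hs: "(\<Sum>n\<in>N. deg n) = 2 * card T" by simp
  have deg1: "1 \<le> deg n" if nN: "n\<in>N" for n
  proof -
    have "N \<noteq> {n}" using assms(2) by auto
    then obtain y where "y\<in>N" "y\<noteq>n" using nN by auto
    then have "(n,y) \<in> (Rel T N)\<^sup>*" using con nN by (auto simp: connected_in_Rel)
    then obtain z where "(n,z) \<in> Rel T N" using \<open>y\<noteq>n\<close> by (metis converse_rtranclE)
    then have "{n,z} \<in> {t\<in>T. n\<in>t}" by (auto simp: Rel_def)
    then have "{t\<in>T. n\<in>t} \<noteq> {}" by auto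
    then show ?thesis unfolding deg_def using finT by (simp add: Suc_le_eq card_gt_0_iff)
  qed
  have "\<exists>n\<in>N. deg n < 2"
  proof (rule ccontr)
    assume "\<not> ?thesis"
    then have "(\<Sum>n\<in>N. (2::nat)) \<le> (\<Sum>n\<in>N. deg n)" by (intro sum_mono) auto
    then show False using hs cnt by simp
  qed
  then obtain n where n: "n\<in>N" "deg n = 1" using deg1 by force
  then obtain t0 where t0: "{t\<in>T. n\<in>t} = {t0}" unfolding deg_def by (meson card_1_singletonE)
  then have "t0 \<in> T" "n \<in> t0" by auto
  then obtain a b where ab: "t0 = {a,b}" "a\<noteq>b" "a\<in>N" "b\<in>N" using sub by blast
  then obtain f where f: "t0 = {n,f}" "f\<noteq>n" "f\<in>N" using \<open>n\<in>t0\<close> by auto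
  show ?thesis
    apply (rule exI[of _ n], rule exI[of _ f])
    using f n t0 \<open>t0\<in>T\<close> by auto
qed

lemma tree_remove:
  assumes "is_tree N T" "e\<in>N" "f\<in>N" "e\<noteq>f" "{e,f}\<in>T" "\<forall>t\<in>T. e\<in>t \<longrightarrow> t={e,f}"
  shows "is_tree (N-{e}) (T-{{e,f}})"
proof -
  have fin: "finite N" and sub: "T \<subseteq> {{a,b}|a b. a\<in>N \<and> b\<in>N \<and> a\<noteq>b}"
    and con: "connected_in T N" and cnt: "card T + 1 = card N"
    using assms by (auto simp: is_tree_def)
  have "T \<subseteq> Pow N" using sub by auto
  then have finT: "finite T" using fin by (meson finite_Pow_iff finite_subset)
  have "T-{{e,f}} \<subseteq> {{a,b}|a b. a\<in>N-{e} \<and> b\<in>N-{e} \<and> a\<noteq>b}"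
  proof
    fix t assume t: "t \<in> T-{{e,f}}"
    then obtain a b where "t={a,b}" "a\<in>N" "b\<in>N" "a\<noteq>b" using sub by blast
    moreover have "e \<notin> t" using t assms(6) by auto
    ultimately show "t \<in> {{a,b}|a b. a\<in>N-{e} \<and> b\<in>N-{e} \<and> a\<noteq>b}" by auto
  qed
  moreover have "connected_in (T-{{e,f}}) (N-{e})" using connected_remove[OF con assms(4,6)] .
  moreover have "card (T-{{e,f}}) + 1 = card (N-{e})"
  proof -
    have a: "card (T-{{e,f}}) = card T - 1" using assms(5) finT by (simp add: card_Diff_singleton)
    have b: "card (N-{e}) = card N - 1" using assms(2) fin by (simp add: card_Diff_singleton)
    have "card T \<ge> 1" using assms(5) finT by (metis One_nat_def Suc_leI card_gt_0_iff empty_iff)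
    then show ?thesis using a b cnt by linarith
  qed
  ultimately show ?thesis using fin by (auto simp: is_tree_def)
qed

definition RI :: "'n set \<Rightarrow> 'n set set \<Rightarrow> ('n \<Rightarrow> 'a set) \<Rightarrow> bool" where
  "RI N T ed \<longleftrightarrow> is_tree N T \<and> (\<forall>v. connected_in T {n\<in>N. v \<in> ed n}) \<and> (\<forall>n\<in>N. finite (ed n))"

lemma RI_mono:
  assumes "RI N T ed" "\<forall>n\<in>N. ed' n \<subseteq> ed n"
    "\<And>v n m. n\<in>N \<Longrightarrow> m\<in>N \<Longrightarrow> v \<in> ed' n \<Longrightarrow> v \<in> ed m \<Longrightarrow> v \<in> ed' m"
  shows "RI N T ed'"
proof -
  have "connected_in T {n\<in>N. v \<in> ed' n}" for v
  proof (cases "\<exists>n\<in>N. v \<in> ed' n")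
    case True
    then have "{n\<in>N. v \<in> ed' n} = {n\<in>N. v \<in> ed n}" using assms(2,3) by blast
    then show ?thesis using assms(1) by (simp add: RI_def)
  next
    case False
    then have e: "{n\<in>N. v \<in> ed' n} = {}" by auto
    have "connected_in T {}" by (simp add: connected_in_def)
    then show ?thesis by (simp only: e)
  qed
  moreover have "\<forall>n\<in>N. finite (ed' n)" using assms(1,2) by (meson RI_def finite_subset)
  ultimately show ?thesis using assms(1) by (simp add: RI_def)
qed

lemma RI_remove:
  assumes "RI N T ed" "2 \<le> card N"
  shows "\<exists>e f. e\<in>N \<and> f\<in>N \<and> e\<noteq>f \<and> RI (N-{e}) (T-{{e,f}}) ed \<and>
     (\<forall>g\<in>N-{e}. ed g \<inter> ed e \<subseteq> ed f)"
proof -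
  have tr: "is_tree N T" using assms(1) by (simp add: RI_def)
  obtain e f where ef: "e\<in>N" "f\<in>N" "e\<noteq>f" "{e,f}\<in>T" "\<forall>t\<in>T. e\<in>t \<longrightarrow> t={e,f}"
    using tree_leaf[OF tr assms(2)] by blast
  have "is_tree (N-{e}) (T-{{e,f}})" using tree_remove[OF tr ef] .
  moreover have "connected_in (T-{{e,f}}) {n\<in>N-{e}. v \<in> ed n}" for v
  proof -
    have "connected_in T {n\<in>N. v \<in> ed n}" using assms(1) by (simp add: RI_def)
    from connected_remove[OF this ef(3,5)] show ?thesis by (simp add: set_diff_eq conj_commute)
       (smt (verit, ccfv_SIG) Collect_cong)
  qed
  moreover have "ed g \<inter> ed e \<subseteq> ed f" if "g\<in>N-{e}" for g
  proof
    fix v assume v: "v \<in> ed g \<inter> ed e"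
    have "connected_in T {n\<in>N. v \<in> ed n}" using assms(1) by (simp add: RI_def)
    from connected_through[OF this ef(3,5)] show "v \<in> ed f" using v that ef by auto
  qed
  ultimately show ?thesis using ef assms(1) unfolding RI_def by blast
qed

lemma card_cases_N:
  assumes "finite N"
  obtains "N = {}" | n where "N = {n}" | "2 \<le> card N"
proof -
  consider "card N = 0" | "card N = 1" | "2 \<le> card N" by linarith
  then show ?thesis using assms that by cases (auto simp: card_1_singleton_iff)
qed

lemma cover_lemma:
  "finite N \<Longrightarrow> RI N T ed \<Longrightarrow> \<exists>T0 C. finite T0 \<and> T0 \<subseteq> \<Union>(ed`N) \<and> C \<subseteq> N \<and>
     (\<forall>n\<in>N. card (T0 \<inter> ed n) \<le> 1) \<and> \<Union>(ed`C) = \<Union>(ed`N) \<and> card C \<le> card T0"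
proof (induction N arbitrary: T ed rule: finite_psubset_induct)
  case (psubset N)
  from psubset.hyps(1) show ?case
  proof (cases rule: card_cases_N)
    case 1 then show ?thesis by (intro exI[of _ "{}"]) auto
  next
    case (2 n)
    show ?thesis
    proof (cases "ed n = {}")
      case True then show ?thesis using 2 by (intro exI[of _ "{}"]) auto
    next
      case False
      then obtain p where p: "p \<in> ed n" by auto
      have "{p} \<inter> ed n = {p}" using p by auto
      then show ?thesis using 2 p by (intro exI[of _ "{p}"] exI[of _ "{n}"]) auto
    qed
  next
    case 3
    obtain e f where ef: "e\<in>N" "f\<in>N" "e\<noteq>f" and RI': "RI (N-{e}) (T-{{e,f}}) ed"
      and inter: "\<forall>g\<in>N-{e}. ed g \<inter> ed e \<subseteq> ed f"
      using RI_remove[OF psubset.prems 3] by iprover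
    have sub: "N - {e} \<subset> N" using ef by auto
    have finN: "finite N" by fact
    show ?thesis
    proof (cases "ed e \<subseteq> \<Union>(ed`(N-{e}))")
      case True
      obtain T0 C where H: "finite T0" "T0 \<subseteq> \<Union>(ed`(N-{e}))" "C \<subseteq> N-{e}"
        "\<forall>n\<in>N-{e}. card (T0 \<inter> ed n) \<le> 1" "\<Union>(ed`C) = \<Union>(ed`(N-{e}))" "card C \<le> card T0"
        using psubset.IH[OF sub RI'] by iprover
      have "ed e \<subseteq> ed f" using True inter by blast
      then have "card (T0 \<inter> ed e) \<le> card (T0 \<inter> ed f)" using H(1) by (intro card_mono) auto
      moreover have "card (T0 \<inter> ed f) \<le> 1" using H(4) ef by blast
      ultimately have ce: "card (T0 \<inter> ed e) \<le> 1" by linarith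
      have U0: "\<Union>(ed`N) = ed e \<union> \<Union>(ed`(N-{e}))" using ef by blast
      have U: "\<Union>(ed`N) = \<Union>(ed`(N-{e}))" using True U0 by blast
      show ?thesis
      proof (rule exI[of _ T0], rule exI[of _ C], intro conjI ballI)
        show "finite T0" by fact
        show "T0 \<subseteq> \<Union>(ed`N)" using H(2) U by simp
        show "C \<subseteq> N" using H(3) by blast
        show "\<Union>(ed`C) = \<Union>(ed`N)" using H(5) U by simp
        show "card C \<le> card T0" by fact
      next
        fix n assume "n \<in> N" then show "card (T0 \<inter> ed n) \<le> 1" using H(4) ce by (cases "n = e") auto
      qed
    next
      case False
      then obtain p where p: "p \<in> ed e" "p \<notin> \<Union>(ed`(N-{e}))" by blast
      define ed' where "ed' g = ed g - ed e" for g
      have RI'': "RI (N-{e}) (T-{{e,f}}) ed'"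
        by (rule RI_mono[OF RI']) (auto simp: ed'_def)
      obtain T1 C1 where H: "finite T1" "T1 \<subseteq> \<Union>(ed'`(N-{e}))" "C1 \<subseteq> N-{e}"
        "\<forall>n\<in>N-{e}. card (T1 \<inter> ed' n) \<le> 1" "\<Union>(ed'`C1) = \<Union>(ed'`(N-{e}))" "card C1 \<le> card T1"
        using psubset.IH[OF sub RI''] by iprover
      have T1e: "T1 \<inter> ed e = {}" using H(2) by (auto simp: ed'_def)
      have pT1: "p \<notin> T1" using H(2) p by (auto simp: ed'_def)
      have finC1: "finite C1" using H(3) finN by (meson finite_Diff finite_subset)
      have c1: "card (insert p T1 \<inter> ed n) \<le> 1" if "n \<in> N" for n
      proof (cases "n = e")
        case True
        then have "insert p T1 \<inter> ed n = {p}" using T1e p by auto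
        then show ?thesis by simp
      next
        case False
        then have "insert p T1 \<inter> ed n = T1 \<inter> ed' n" using T1e p that by (auto simp: ed'_def)
        then show ?thesis using H(4) that False by auto
      qed
      have U1: "\<Union>(ed`(insert e C1)) = \<Union>(ed`N)"
      proof -
        have gen: "\<Union>(ed'`X) = \<Union>(ed`X) - ed e" for X by (auto simp: ed'_def)
        have h: "\<Union>(ed`C1) - ed e = \<Union>(ed`(N-{e})) - ed e" using H(5) by (simp only: gen)
        have U0: "\<Union>(ed`N) = ed e \<union> \<Union>(ed`(N-{e}))" using ef by blast
        have "\<Union>(ed`(insert e C1)) = ed e \<union> \<Union>(ed`C1)" by simp
        also have "\<dots> = ed e \<union> (\<Union>(ed`C1) - ed e)" by (rule Un_Diff_cancel[symmetric])
        also have "\<dots> = ed e \<union> (\<Union>(ed`(N-{e})) - ed e)" by (simp only: h)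
        also have "\<dots> = ed e \<union> \<Union>(ed`(N-{e}))" by (rule Un_Diff_cancel)
        also have "\<dots> = \<Union>(ed`N)" by (rule U0[symmetric])
        finally show ?thesis .
      qed
      have cc: "card (insert e C1) \<le> card (insert p T1)"
        using H(6) pT1 H(1) finC1 by (simp add: card_insert_if)
      have sT: "insert p T1 \<subseteq> \<Union>(ed`N)"
      proof -
        have "\<Union>(ed'`(N-{e})) \<subseteq> \<Union>(ed`N)" by (auto simp: ed'_def)
        then have "T1 \<subseteq> \<Union>(ed`N)" using H(2) by (rule subset_trans[rotated])
        moreover have "p \<in> \<Union>(ed`N)" using p(1) ef(1) by blast
        ultimately show ?thesis by simp
      qed
      show ?thesis
      proof (rule exI[of _ "insert p T1"], rule exI[of _ "insert e C1"], intro conjI ballI)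
        show "finite (insert p T1)" using H(1) by simp
        show "insert p T1 \<subseteq> \<Union>(ed`N)" by (rule sT)
        show "insert e C1 \<subseteq> N" using H(3) ef by blast
        show "\<Union>(ed`(insert e C1)) = \<Union>(ed`N)" by (rule U1)
        show "card (insert e C1) \<le> card (insert p T1)" by (rule cc)
      next
        fix n assume "n \<in> N" then show "card (insert p T1 \<inter> ed n) \<le> 1" by (rule c1)
      qed
    qed
  qed
qed

lemma hit_lemma:
  "finite N \<Longrightarrow> RI N T ed \<Longrightarrow> \<exists>T0. finite T0 \<and> T0 \<subseteq> \<Union>(ed`N) \<and>
     (\<forall>n\<in>N. card (T0 \<inter> ed n) \<le> 1) \<and>
     (\<forall>n\<in>N. ed n \<noteq> {} \<and> (\<forall>m\<in>N. ed n \<subseteq> ed m \<longrightarrow> ed m = ed n) \<longrightarrow> card (T0 \<inter> ed n) = 1)"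
proof (induction N arbitrary: T rule: finite_psubset_induct)
  case (psubset N)
  from psubset.hyps(1) show ?case
  proof (cases rule: card_cases_N)
    case 1 then show ?thesis by (intro exI[of _ "{}"]) auto
  next
    case (2 n)
    show ?thesis
    proof (cases "ed n = {}")
      case True then show ?thesis using 2 by (intro exI[of _ "{}"]) auto
    next
      case False
      then obtain p where p: "p \<in> ed n" by auto
      have "{p} \<inter> ed n = {p}" using p by auto
      then show ?thesis using 2 p by (intro exI[of _ "{p}"]) auto
    qed
  next
    case 3
    obtain e f where ef: "e\<in>N" "f\<in>N" "e\<noteq>f" and RI': "RI (N-{e}) (T-{{e,f}}) ed"
      and inter: "\<forall>g\<in>N-{e}. ed g \<inter> ed e \<subseteq> ed f"
      using RI_remove[OF psubset.prems 3] by iprover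
    have sub: "N - {e} \<subset> N" using ef by auto
    obtain T1 where H: "finite T1" "T1 \<subseteq> \<Union>(ed`(N-{e}))"
      "\<forall>n\<in>N-{e}. card (T1 \<inter> ed n) \<le> 1"
      "\<forall>n\<in>N-{e}. ed n \<noteq> {} \<and> (\<forall>m\<in>N-{e}. ed n \<subseteq> ed m \<longrightarrow> ed m = ed n) \<longrightarrow> card (T1 \<inter> ed n) = 1"
      using psubset.IH[OF sub RI'] by iprover
    have maxN: "ed n \<noteq> {} \<and> (\<forall>m\<in>N-{e}. ed n \<subseteq> ed m \<longrightarrow> ed m = ed n)"
      if "n \<in> N" "ed n \<noteq> {} \<and> (\<forall>m\<in>N. ed n \<subseteq> ed m \<longrightarrow> ed m = ed n)" for n
      using that by auto
    have T1ef: "T1 \<inter> ed e \<subseteq> T1 \<inter> ed f" using H(2) inter by blast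
    have cf: "card (T1 \<inter> ed f) \<le> 1" using H(3) ef by auto
    show ?thesis
    proof (cases "T1 \<inter> ed e = {}")
      case False
      have "card (T1 \<inter> ed e) \<le> card (T1 \<inter> ed f)" using T1ef H(1) by (intro card_mono) auto
      moreover have "card (T1 \<inter> ed e) \<noteq> 0" using False H(1) by simp
      ultimately have ce: "card (T1 \<inter> ed e) = 1" using cf by linarith
      show ?thesis
      proof (rule exI[of _ T1], intro conjI ballI impI)
        show "finite T1" by fact
        show "T1 \<subseteq> \<Union>(ed`N)" using H(2) by auto
      next
        fix n assume "n \<in> N" then show "card (T1 \<inter> ed n) \<le> 1" using H(3) ce by (cases "n = e") auto
      next
        fix n assume "n \<in> N" "ed n \<noteq> {} \<and> (\<forall>m\<in>N. ed n \<subseteq> ed m \<longrightarrow> ed m = ed n)"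
        then show "card (T1 \<inter> ed n) = 1" using H(4) ce maxN by (cases "n = e") auto
      qed
    next
      case T1e: True
      show ?thesis
      proof (cases "ed e \<subseteq> \<Union>(ed`(N-{e}))")
        case True
        have eef: "ed e \<subseteq> ed f" using True inter by blast
        have nomax: "\<not> (ed e \<noteq> {} \<and> (\<forall>m\<in>N. ed e \<subseteq> ed m \<longrightarrow> ed m = ed e))"
        proof
          assume A: "ed e \<noteq> {} \<and> (\<forall>m\<in>N. ed e \<subseteq> ed m \<longrightarrow> ed m = ed e)"
          then have fe: "ed f = ed e" using eef ef by blast
          have "ed f \<noteq> {} \<and> (\<forall>m\<in>N-{e}. ed f \<subseteq> ed m \<longrightarrow> ed m = ed f)" using A fe by auto
          then have "card (T1 \<inter> ed f) = 1" using H(4) ef by auto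
          then show False using T1e fe by simp
        qed
        have c0: "card (T1 \<inter> ed e) \<le> 1" using T1e by simp
        show ?thesis
        proof (rule exI[of _ T1], intro conjI ballI impI)
          show "finite T1" by fact
          show "T1 \<subseteq> \<Union>(ed`N)" using H(2) by auto
        next
          fix n assume "n \<in> N" then show "card (T1 \<inter> ed n) \<le> 1" using H(3) c0 by (cases "n = e") auto
        next
          fix n assume "n \<in> N" "ed n \<noteq> {} \<and> (\<forall>m\<in>N. ed n \<subseteq> ed m \<longrightarrow> ed m = ed n)"
          then show "card (T1 \<inter> ed n) = 1" using H(4) nomax maxN by (cases "n = e") auto
        qed
      next
        case False
        then obtain p where p: "p \<in> ed e" "p \<notin> \<Union>(ed`(N-{e}))" by blast
        have pn: "insert p T1 \<inter> ed n = T1 \<inter> ed n" if "n \<in> N-{e}" for n using p that by auto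
        have pe: "insert p T1 \<inter> ed e = {p}" using p T1e by auto
        show ?thesis
        proof (rule exI[of _ "insert p T1"], intro conjI ballI impI)
          show "finite (insert p T1)" using H(1) by simp
          show "insert p T1 \<subseteq> \<Union>(ed`N)" using H(2) p ef by auto
        next
          fix n assume "n \<in> N" then show "card (insert p T1 \<inter> ed n) \<le> 1"
            using H(3) pn pe by (cases "n = e") auto
        next
          fix n assume "n \<in> N" "ed n \<noteq> {} \<and> (\<forall>m\<in>N. ed n \<subseteq> ed m \<longrightarrow> ed m = ed n)"
          then show "card (insert p T1 \<inter> ed n) = 1" using H(4) pn pe maxN by (cases "n = e") auto
        qed
      qed
    qed
  qed
qed

lemma packing_bound:
  assumes "finite G" "finite T0" "\<forall>g\<in>G. card (T0 \<inter> g) = 1" "frac_edge_packing G w"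
  shows "sum w G \<le> real (card T0)"
proof -
  have "sum w G = (\<Sum>g\<in>G. \<Sum>t\<in>{t. t\<in>T0 \<and> t\<in>g}. w g)"
  proof (rule sum.cong)
    fix g assume "g \<in> G"
    then have "card {t. t\<in>T0 \<and> t\<in>g} = 1" using assms(3) by (simp add: Int_def)
    then show "w g = (\<Sum>t\<in>{t. t\<in>T0 \<and> t\<in>g}. w g)" by simp
  qed simp
  also have "\<dots> = (\<Sum>t\<in>T0. \<Sum>g\<in>{g. g\<in>G \<and> t\<in>g}. w g)"
    by (rule sum.swap_restrict) (use assms in auto)
  also have "\<dots> \<le> (\<Sum>t\<in>T0. 1)"
  proof (rule sum_mono)
    fix t assume "t \<in> T0"
    show "(\<Sum>g\<in>{g. g\<in>G \<and> t\<in>g}. w g) \<le> 1"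
    proof (cases "t \<in> hverts G")
      case True
      then show ?thesis using assms(4) unfolding frac_edge_packing_def by auto
    next
      case False
      then have e: "{g. g\<in>G \<and> t\<in>g} = {}" by (auto simp: hverts_def)
      show ?thesis by (simp only: e sum.empty)
    qed
  qed
  finally show ?thesis by simp
qed

lemma tau_le:
  assumes "finite G" "finite T0" "\<forall>g\<in>G. card (T0 \<inter> g) = 1"
  shows "tau_star G \<le> real (card T0)"
  unfolding tau_star_def
proof (rule cSup_least)
  have "frac_edge_packing G (\<lambda>_. 0)" by (simp add: frac_edge_packing_def)
  then show "{sum w G |w. frac_edge_packing G w} \<noteq> {}" by blast
next
  fix x assume "x \<in> {sum w G |w. frac_edge_packing G w}"
  then show "x \<le> real (card T0)" using packing_bound[OF assms] by blast
qed

lemma tau_singletons: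
  assumes "finite T0"
  shows "real (card T0) \<le> tau_star ((\<lambda>t. {t}) ` T0)"
  unfolding tau_star_def
proof (rule cSup_upper)
  let ?G = "(\<lambda>t. {t}) ` T0"
  have fp: "frac_edge_packing ?G (\<lambda>_. 1)"
  proof -
    have "{e\<in>?G. v\<in>e} = {{v}}" if "v \<in> hverts ?G" for v using that by (auto simp: hverts_def)
    then show ?thesis unfolding frac_edge_packing_def by simp
  qed
  have "sum (\<lambda>_. 1::real) ?G = real (card T0)"
    by (simp add: card_image)
  then show "real (card T0) \<in> {sum w ?G |w. frac_edge_packing ?G w}" using fp by force
  have "\<forall>g\<in>?G. card (T0 \<inter> g) = 1" by auto
  then show "bdd_above {sum w ?G |w. frac_edge_packing ?G w}"
    using packing_bound[OF finite_imageI[OF assms] assms] unfolding bdd_above_def by blast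
qed

lemma cover_bound:
  assumes "finite E" "finite T0" "T0 \<subseteq> hverts E" "\<forall>e\<in>E. card (T0 \<inter> e) \<le> 1" "frac_edge_cover E w"
  shows "real (card T0) \<le> sum w E"
proof -
  have w0: "\<forall>e\<in>E. 0 \<le> w e" using assms(5) by (simp add: frac_edge_cover_def)
  have "real (card T0) = (\<Sum>t\<in>T0. 1)" by simp
  also have "\<dots> \<le> (\<Sum>t\<in>T0. \<Sum>e\<in>{e. e\<in>E \<and> t\<in>e}. w e)"
  proof (rule sum_mono)
    fix t assume "t \<in> T0"
    then have "t \<in> hverts E" using assms(3) by auto
    then show "1 \<le> (\<Sum>e\<in>{e. e\<in>E \<and> t\<in>e}. w e)" using assms(5) unfolding frac_edge_cover_def by auto
  qed
  also have "\<dots> = (\<Sum>e\<in>E. \<Sum>t\<in>{t. t\<in>T0 \<and> t\<in>e}. w e)"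
    by (rule sum.swap_restrict[symmetric]) (use assms in auto)
  also have "\<dots> \<le> sum w E"
  proof (rule sum_mono)
    fix e assume e: "e \<in> E"
    have "card {t. t\<in>T0 \<and> t\<in>e} \<le> 1" using assms(4) e by (simp add: Int_def)
    then have "real (card {t. t\<in>T0 \<and> t\<in>e}) * w e \<le> 1 * w e"
      using w0 e by (intro mult_right_mono) auto
    then show "(\<Sum>t\<in>{t. t\<in>T0 \<and> t\<in>e}. w e) \<le> w e" by simp
  qed
  finally show ?thesis .
qed

lemma rho_ge:
  assumes "finite E" "finite T0" "T0 \<subseteq> hverts E" "\<forall>e\<in>E. card (T0 \<inter> e) \<le> 1"
  shows "real (card T0) \<le> rho_star E"
  unfolding rho_star_def
proof (rule cInf_greatest)
  have "frac_edge_cover E (\<lambda>_. 1)"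
  proof -
    have "1 \<le> (\<Sum>e\<in>{e\<in>E. v\<in>e}. 1::real)" if "v \<in> hverts E" for v
    proof -
      have "{e\<in>E. v\<in>e} \<noteq> {}" using that by (auto simp: hverts_def)
      then have "card {e\<in>E. v\<in>e} \<ge> 1" using assms(1) by (simp add: Suc_le_eq card_gt_0_iff)
      then show ?thesis by simp
    qed
    then show ?thesis by (simp add: frac_edge_cover_def)
  qed
  then show "{sum w E |w. frac_edge_cover E w} \<noteq> {}" by blast
next
  fix x assume "x \<in> {sum w E |w. frac_edge_cover E w}"
  then show "real (card T0) \<le> x" using cover_bound[OF assms] by blast
qed

lemma rho_le:
  assumes "finite E" "C \<subseteq> E" "\<Union>C = hverts E"
  shows "rho_star E \<le> real (card C)"
  unfolding rho_star_def
proof (rule cInf_lower)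
  define w where "w e = (if e \<in> C then 1 else (0::real))" for e
  have fc: "frac_edge_cover E w"
    unfolding frac_edge_cover_def
  proof (intro conjI ballI)
    fix e show "0 \<le> w e" by (simp add: w_def)
  next
    fix v assume "v \<in> hverts E"
    then obtain c where c: "c \<in> C" "v \<in> c" using assms(3) by auto
    have "w c \<le> (\<Sum>e\<in>{e\<in>E. v\<in>e}. w e)"
      by (rule member_le_sum) (use c assms in \<open>auto simp: w_def\<close>)
    then show "1 \<le> (\<Sum>e\<in>{e\<in>E. v\<in>e}. w e)" using c by (simp add: w_def)
  qed
  have "sum w E = real (card C)"
  proof -
    have "sum w E = sum (\<lambda>_. 1::real) (E \<inter> C)"
      unfolding w_def using sum.inter_restrict[OF assms(1), of "\<lambda>_. 1::real" C] by simp
    also have "E \<inter> C = C" using assms(2) by blast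
    finally show ?thesis by simp
  qed
  then show "real (card C) \<in> {sum w E |w. frac_edge_cover E w}" using fc by force
  show "bdd_below {sum w E |w. frac_edge_cover E w}"
    unfolding bdd_below_def frac_edge_cover_def by (auto intro!: exI[of _ 0] sum_nonneg)
qed

theorem lemma3p7:
  fixes E :: "'a set set"
  assumes "finite E"
    and "\<forall>e\<in>E. finite e"
    and "alpha_acyclic E"
  shows "kappa E = rho_star E"
proof -
  obtain T where jt: "join_tree E T" using assms(3) alpha_acyclic_def by blast
  have RIE: "RI E T (\<lambda>g. g)"
  proof -
    have "connected_in T {n\<in>E. v \<in> n}" for v
    proof (cases "v \<in> hverts E")
      case True then show ?thesis using jt by (simp add: join_tree_def)
    next
      case False
      then have e: "{n\<in>E. v \<in> n} = {}" by (auto simp: hverts_def)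
      have "connected_in T {}" by (simp add: connected_in_def)
      then show ?thesis by (simp only: e)
    qed
    then show ?thesis using jt assms(2) by (simp add: RI_def join_tree_def)
  qed
  have finV: "finite (hverts E)" using assms(1,2) by (simp add: hverts_def)
  define K where "K = {tau_star (red (induced E S)) | S. S \<subseteq> hverts E}"
  have K_eq: "K = (\<lambda>S. tau_star (red (induced E S))) ` Pow (hverts E)" unfolding K_def by blast
  have finK: "finite K" using finV K_eq by simp
  have neK: "K \<noteq> {}" using K_eq by auto
  have upper: "tau_star (red (induced E S)) \<le> rho_star E" if S: "S \<subseteq> hverts E" for S
  proof -
    have RIS: "RI E T (\<lambda>g. S \<inter> g)" by (rule RI_mono[OF RIE]) auto
    obtain T0 where H: "finite T0" "T0 \<subseteq> \<Union>((\<lambda>g. S\<inter>g)`E)" "\<forall>n\<in>E. card (T0 \<inter> (S\<inter>n)) \<le> 1"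
      "\<forall>n\<in>E. S\<inter>n \<noteq> {} \<and> (\<forall>m\<in>E. S\<inter>n \<subseteq> S\<inter>m \<longrightarrow> S\<inter>m = S\<inter>n) \<longrightarrow> card (T0 \<inter> (S\<inter>n)) = 1"
      using hit_lemma[OF assms(1) RIS] by iprover
    let ?G = "red (induced E S)"
    have "?G \<subseteq> (\<lambda>e. S\<inter>e)`E" by (auto simp: red_def induced_def)
    then have finG: "finite ?G" using assms(1) by (meson finite_imageI finite_subset)
    have "\<forall>g\<in>?G. card (T0 \<inter> g) = 1"
    proof
      fix g assume "g \<in> ?G"
      then have g1: "g \<in> induced E S" and mx: "\<forall>e'\<in>induced E S. e' \<noteq> g \<longrightarrow> \<not> g \<subseteq> e'"
        by (auto simp: red_def)
      from g1 obtain e where e: "e\<in>E" "g = S\<inter>e" "S\<inter>e \<noteq> {}" by (auto simp: induced_def)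
      have "\<forall>m\<in>E. S\<inter>e \<subseteq> S\<inter>m \<longrightarrow> S\<inter>m = S\<inter>e"
      proof (intro ballI impI)
        fix m assume m: "m\<in>E" "S\<inter>e \<subseteq> S\<inter>m"
        then have "S\<inter>m \<in> induced E S" using e by (auto simp: induced_def)
        then show "S\<inter>m = S\<inter>e" using mx e m by auto
      qed
      then have "card (T0 \<inter> (S\<inter>e)) = 1" using H(4) e(1) e(3) by blast
      then show "card (T0\<inter>g) = 1" using e(2) by simp
    qed
    then have "tau_star ?G \<le> real (card T0)" by (rule tau_le[OF finG H(1)])
    also have "real (card T0) \<le> rho_star E"
    proof (rule rho_ge[OF assms(1) H(1)])
      show "T0 \<subseteq> hverts E" using H(2) by (auto simp: hverts_def)
      have "T0 \<subseteq> S" using H(2) by auto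
      then have "T0 \<inter> e = T0 \<inter> (S \<inter> e)" for e by blast
      then show "\<forall>e\<in>E. card (T0\<inter>e) \<le> 1" using H(3) by simp
    qed
    finally show ?thesis .
  qed
  have lower: "\<exists>S. S \<subseteq> hverts E \<and> rho_star E \<le> tau_star (red (induced E S))"
  proof -
    obtain T0 C where H: "finite T0" "T0 \<subseteq> \<Union>((\<lambda>g. g)`E)" "C \<subseteq> E" "\<forall>n\<in>E. card (T0 \<inter> n) \<le> 1"
      "\<Union>((\<lambda>g. g)`C) = \<Union>((\<lambda>g. g)`E)" "card C \<le> card T0"
      using cover_lemma[OF assms(1) RIE] by iprover
    have sing: "T0 \<inter> e = {t}" if "e \<in> E" "t \<in> T0" "t \<in> e" for e t
    proof -
      have "card (T0\<inter>e) \<le> Suc 0" using H(4) that(1) by simp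
      then have "\<forall>a\<in>T0\<inter>e. \<forall>b\<in>T0\<inter>e. a = b" using H(1) by (simp add: card_le_Suc0_iff_eq)
      then show ?thesis using that by blast
    qed
    have ind: "induced E T0 = (\<lambda>t. {t}) ` T0"
    proof
      show "induced E T0 \<subseteq> (\<lambda>t. {t})`T0"
      proof
        fix x assume "x \<in> induced E T0"
        then obtain e where e: "e\<in>E" "x = T0\<inter>e" "T0\<inter>e \<noteq> {}" by (auto simp: induced_def)
        then obtain t where "t \<in> T0" "t \<in> e" by auto
        then show "x \<in> (\<lambda>t. {t})`T0" using e sing by auto
      qed
      show "(\<lambda>t. {t})`T0 \<subseteq> induced E T0"
      proof
        fix x assume "x \<in> (\<lambda>t. {t})`T0"
        then obtain t where t: "t\<in>T0" "x={t}" by auto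
        then obtain e where e: "e\<in>E" "t\<in>e" using H(2) by auto
        then have "T0\<inter>e = {t}" using sing t by auto
        then show "x \<in> induced E T0" using e t unfolding induced_def by blast
      qed
    qed
    have red_eq: "red ((\<lambda>t. {t})`T0) = (\<lambda>t. {t})`T0" by (auto simp: red_def)
    have "rho_star E \<le> real (card C)"
      by (rule rho_le[OF assms(1) H(3)]) (use H(5) in \<open>simp add: hverts_def\<close>)
    also have "\<dots> \<le> real (card T0)" using H(6) by simp
    also have "\<dots> \<le> tau_star (red (induced E T0))" unfolding ind red_eq by (rule tau_singletons[OF H(1)])
    finally have "rho_star E \<le> tau_star (red (induced E T0))" .
    moreover have "T0 \<subseteq> hverts E" using H(2) by (simp add: hverts_def)
    ultimately show ?thesis by blast
  qed
  have up': "\<forall>k\<in>K. k \<le> rho_star E" using upper unfolding K_def by blast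
  have lo': "\<exists>k\<in>K. rho_star E \<le> k" using lower unfolding K_def by blast
  have "Max K = rho_star E"
  proof (rule antisym)
    show "Max K \<le> rho_star E" using Max_le_iff[OF finK neK] up' by blast
    show "rho_star E \<le> Max K" using Max_ge_iff[OF finK neK] lo' by blast
  qed
  then show ?thesis unfolding kappa_def K_def by simp
qed

end
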